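(* Let $p>1$ and let $\mathbf f^*$ be the optimal solution to the minimum weighted $p$-norm flow problem. Then $\mathcal E(\mathbf f^* )\le\frac1pn\|\mathbf r\|_\infty\|\mathbf b\|_1^p$. In addition, for all $(i,j)\in\vec E$, $|f^*(i,j)|\le(nR)^{\frac1p}\|\mathbf b\|_1$, which implies that $|x^*(i)-x^*(j)|\le r(i,j)(nR)^{\frac{p-1}p}\|\mathbf b\|_1^{p-1}$ for all $(i,j)\in\vec E$.
   Context: $G=(V,E)$ is a connected undirected graph with $n$ vertices, weights $r(e)>0$, $R=\max_er(e)/\min_er(e)$, $\|\mathbf r\|_\infty=\max_er(e)$, and fixed orientation $\vec E$ (with $f(j,i)=-f(i,j)$). $\mathbf b\in\mathbb R^V$ with $\sum_ib(i)=0$; a $\mathbf b$-flow has net outflow $b(i)$ at every vertex $i$. $\mathcal E(\mathbf f)=\frac1p\sum_{e\in\vec E}r(e)|f(e)|^p$ and $\mathbf f^*$ minimizes it over $\mathbf b$-flows. $\mathbf x^*$ is an optimal solution of the dual problem $\max_{\mathbf x}\ \mathbf b^\top\mathbf x-(1-\frac1p)\sum_{(i,j)\in\vec E}\big(|x(i)-x(j)|^p/r(i,j)\big)^{\frac1{p-1}}$; optimal $\mathbf f^*,\mathbf x^*$ satisfy $r(i,j)f^*(i,j)|f^*(i,j)|^{p-2}=x^*(i)-x^*(j)$ for all $(i,j)\in\vec E$. *)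

theory Defs
  imports Complex_Main
begin

text \<open>A graph: finite vertex set V, oriented edge set Ed (each undirected edge
  appears exactly once, as an ordered pair; no self-loops).\<close>

definition oriented_graph :: "'a set \<Rightarrow> ('a \<times> 'a) set \<Rightarrow> bool" where
  "oriented_graph V Ed \<longleftrightarrow> finite V \<and> Ed \<subseteq> V \<times> V \<and>
     (\<forall>i j. (i, j) \<in> Ed \<longrightarrow> i \<noteq> j \<and> (j, i) \<notin> Ed)"

definition connected_graph :: "'a set \<Rightarrow> ('a \<times> 'a) set \<Rightarrow> bool" where
  "connected_graph V Ed \<longleftrightarrow> V \<noteq> {} \<and>
     (\<forall>u\<in>V. \<forall>v\<in>V. (u, v) \<in> (Ed \<union> Ed\<inverse>)\<^sup>*)"

definition net_outflow :: "('a \<times> 'a) set \<Rightarrow> ('a \<times> 'a \<Rightarrow> real) \<Rightarrow> 'a \<Rightarrow> real" where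
  "net_outflow Ed f i = (\<Sum>e\<in>{e\<in>Ed. fst e = i}. f e) - (\<Sum>e\<in>{e\<in>Ed. snd e = i}. f e)"

definition is_b_flow :: "'a set \<Rightarrow> ('a \<times> 'a) set \<Rightarrow> ('a \<Rightarrow> real) \<Rightarrow> ('a \<times> 'a \<Rightarrow> real) \<Rightarrow> bool" where
  "is_b_flow V Ed b f \<longleftrightarrow> (\<forall>i\<in>V. net_outflow Ed f i = b i)"

definition energy :: "real \<Rightarrow> ('a \<times> 'a) set \<Rightarrow> ('a \<times> 'a \<Rightarrow> real) \<Rightarrow> ('a \<times> 'a \<Rightarrow> real) \<Rightarrow> real" where
  "energy p Ed r f = (1 / p) * (\<Sum>e\<in>Ed. r e * \<bar>f e\<bar> powr p)"

definition dual_obj :: "real \<Rightarrow> 'a set \<Rightarrow> ('a \<times> 'a) set \<Rightarrow> ('a \<times> 'a \<Rightarrow> real) \<Rightarrow> ('a \<Rightarrow> real) \<Rightarrow> ('a \<Rightarrow> real) \<Rightarrow> real" where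
  "dual_obj p V Ed r b x = (\<Sum>i\<in>V. b i * x i)
     - (1 - 1 / p) * (\<Sum>(i, j)\<in>Ed. (\<bar>x i - x j\<bar> powr p / r (i, j)) powr (1 / (p - 1)))"

definition r_inf :: "('a \<times> 'a) set \<Rightarrow> ('a \<times> 'a \<Rightarrow> real) \<Rightarrow> real" where
  "r_inf Ed r = Max (r ` Ed)"

definition r_ratio :: "('a \<times> 'a) set \<Rightarrow> ('a \<times> 'a \<Rightarrow> real) \<Rightarrow> real" where
  "r_ratio Ed r = Max (r ` Ed) / Min (r ` Ed)"

definition norm1 :: "'a set \<Rightarrow> ('a \<Rightarrow> real) \<Rightarrow> real" where
  "norm1 V b = (\<Sum>i\<in>V. \<bar>b i\<bar>)"

end

theory Submission imports Defs begin

lemma crossing: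
  assumes "(x, y) \<in> R\<^sup>*" "x \<in> T" "y \<notin> T"
  shows "\<exists>a c. (a, c) \<in> R \<and> a \<in> T \<and> c \<notin> T"
  using assms by (induction rule: rtrancl_induct) auto

lemma net_outflow_add:
  assumes "finite Ed"
  shows "net_outflow Ed (\<lambda>e. f e + (if e = e0 then c else 0)) i
    = net_outflow Ed f i + (if e0 \<in> Ed \<and> fst e0 = i then c else 0) - (if e0 \<in> Ed \<and> snd e0 = i then c else 0)"
proof -
  have f1: "finite {e\<in>Ed. fst e = i}" "finite {e\<in>Ed. snd e = i}" using assms by auto
  show ?thesis unfolding net_outflow_def
    using f1 by (simp add: sum.distrib sum.delta' split: if_splits)
qed

lemma net_outflow_lin:
  assumes "finite Ed"
  shows "net_outflow Ed (\<lambda>e. \<Sum>u\<in>V. b u * phi u e) i = (\<Sum>u\<in>V. b u * net_outflow Ed (phi u) i)"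
  unfolding net_outflow_def
  by (simp add: sum_subtractf sum_distrib_left right_diff_distrib sum.swap[of _ V])

definition tinv where
  "tinv V Ed v0 T S phi \<longleftrightarrow> T \<subseteq> V \<and> v0 \<in> T \<and> S \<subseteq> Ed \<and> S \<subseteq> T \<times> T \<and> card S \<le> card T
    \<and> (\<forall>u\<in>T. \<forall>e. e \<notin> S \<longrightarrow> phi u e = 0)
    \<and> (\<forall>u\<in>T. \<forall>e. \<bar>phi u e\<bar> \<le> (1::real))
    \<and> (\<forall>u\<in>T. \<forall>i. net_outflow Ed (phi u) i = (if i = u then 1 else 0) - (if i = v0 then 1 else 0))"

lemma tinv_step:
  assumes graph: "oriented_graph V Ed" and conn: "connected_graph V Ed"
    and inv: "tinv V Ed v0 T S phi" and TV: "T \<noteq> V"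
  shows "\<exists>T' S' phi'. card T' = Suc (card T) \<and> tinv V Ed v0 T' S' phi'"
proof -
  have fin: "finite V" "Ed \<subseteq> V \<times> V" using graph unfolding oriented_graph_def by auto
  have finE: "finite Ed" using fin finite_subset finite_cartesian_product by blast
  have TsV: "T \<subseteq> V" "v0 \<in> T" using inv unfolding tinv_def by auto
  obtain y where y: "y \<in> V" "y \<notin> T" using TsV TV by blast
  have "(v0, y) \<in> (Ed \<union> Ed\<inverse>)\<^sup>*" using conn y TsV unfolding connected_graph_def by auto
  then obtain t w where tw: "(t, w) \<in> Ed \<union> Ed\<inverse>" "t \<in> T" "w \<notin> T"
    using crossing[of v0 y _ T] y TsV by blast
  have wV: "w \<in> V" using tw fin by auto
  have finT: "finite T" using TsV fin finite_subset by blast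
  have finS: "finite S" using inv finE finite_subset unfolding tinv_def by blast
  obtain e0 and c :: real where e0: "e0 \<in> Ed" "e0 = (t, w) \<and> c = -1 \<or> e0 = (w, t) \<and> c = 1"
    using tw by auto
  have e0S: "e0 \<notin> S" using inv tw e0 unfolding tinv_def by auto
  have tw_ne: "t \<noteq> w" using tw by auto
  define phi' where "phi' = phi(w := (\<lambda>e. phi t e + (if e = e0 then c else 0)))"
  have "tinv V Ed v0 (insert w T) (insert e0 S) phi'"
    unfolding tinv_def
  proof (intro conjI)
    show "insert w T \<subseteq> V" using wV TsV by auto
    show "v0 \<in> insert w T" using TsV by auto
    show "insert e0 S \<subseteq> Ed" using inv e0 unfolding tinv_def by auto
    show "insert e0 S \<subseteq> insert w T \<times> insert w T" using inv e0 tw unfolding tinv_def by auto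
    show "card (insert e0 S) \<le> card (insert w T)" using inv e0S finS finT tw unfolding tinv_def by auto
    show "\<forall>u\<in>insert w T. \<forall>e. e \<notin> insert e0 S \<longrightarrow> phi' u e = 0"
      using inv tw unfolding tinv_def phi'_def by auto
    have pt0: "phi t e0 = 0" using inv tw(2) e0S unfolding tinv_def by blast
    show "\<forall>u\<in>insert w T. \<forall>e. \<bar>phi' u e\<bar> \<le> 1"
      using inv tw e0 pt0 unfolding tinv_def phi'_def by auto
    show "\<forall>u\<in>insert w T. \<forall>i. net_outflow Ed (phi' u) i = (if i = u then 1 else 0) - (if i = v0 then 1 else 0)"
    proof (intro ballI allI)
      fix u i assume u: "u \<in> insert w T"
      show "net_outflow Ed (phi' u) i = (if i = u then 1 else 0) - (if i = v0 then 1 else 0)"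
      proof (cases "u = w")
        case True
        have "phi' u = (\<lambda>e. phi t e + (if e = e0 then c else 0))" using True phi'_def by auto
        then have "net_outflow Ed (phi' u) i = net_outflow Ed (phi t) i + (if e0 \<in> Ed \<and> fst e0 = i then c else 0) - (if e0 \<in> Ed \<and> snd e0 = i then c else 0)"
          using net_outflow_add[OF finE] by simp
        also have "\<dots> = (if i = u then 1 else 0) - (if i = v0 then 1 else 0)"
          using inv tw e0 True tw_ne unfolding tinv_def by auto
        finally show ?thesis .
      next
        case False
        then show ?thesis using u inv unfolding tinv_def phi'_def by auto
      qed
    qed
  qed
  moreover have "card (insert w T) = Suc (card T)" using finT tw by auto
  ultimately show ?thesis by blast
qed

lemma tree_flows:
  assumes graph: "oriented_graph V Ed" and conn: "connected_graph V Ed" and v0: "v0 \<in> V"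
  shows "\<exists>S phi. tinv V Ed v0 V S phi"
proof -
  have fin: "finite V" using graph unfolding oriented_graph_def by auto
  have "\<forall>k. k < card V \<longrightarrow> (\<exists>T S phi. card T = Suc k \<and> tinv V Ed v0 T S phi)"
  proof (intro allI)
    fix k show "k < card V \<longrightarrow> (\<exists>T S phi. card T = Suc k \<and> tinv V Ed v0 T S phi)"
    proof (induction k)
      case 0
      have "tinv V Ed v0 {v0} {} (\<lambda>_ _. 0)" unfolding tinv_def net_outflow_def using v0 by auto
      then show ?case by force
    next
      case (Suc k)
      show ?case
      proof
        assume k: "Suc k < card V"
        then obtain T S phi where T: "card T = Suc k" "tinv V Ed v0 T S phi" using Suc by auto
        have "T \<noteq> V" using T k by auto
        then show "\<exists>T S phi. card T = Suc (Suc k) \<and> tinv V Ed v0 T S phi"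
          using tinv_step[OF graph conn T(2)] T by auto
      qed
    qed
  qed
  moreover have "card V > 0" using fin v0 card_gt_0_iff by blast
  ultimately obtain T S phi where T: "card T = card V" "tinv V Ed v0 T S phi"
    by (metis Suc_pred' lessI)
  have "T = V" using T fin unfolding tinv_def by (meson card_subset_eq)
  then show ?thesis using T by blast
qed

lemma energy_bound:
  assumes graph: "oriented_graph V Ed" and conn: "connected_graph V Ed"
    and rpos: "\<forall>e\<in>Ed. r e > 0" and bsum: "(\<Sum>i\<in>V. b i) = 0" and p1: "p > 1"
    and fopt: "\<forall>g. is_b_flow V Ed b g \<longrightarrow> energy p Ed r fstar \<le> energy p Ed r g"
  shows "energy p Ed r fstar \<le> (1 / p) * real (card V) * r_inf Ed r * norm1 V b powr p"
proof -
  have fin: "finite V" "Ed \<subseteq> V \<times> V" using graph unfolding oriented_graph_def by auto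
  have finE: "finite Ed" using fin finite_subset finite_cartesian_product by blast
  obtain v0 where v0: "v0 \<in> V" using conn unfolding connected_graph_def by auto
  show ?thesis
  proof (cases "Ed = {}")
    case True
    then show ?thesis unfolding energy_def
    proof -
      have "\<forall>u\<in>V. u = v0"
      proof
        fix u assume u: "u \<in> V"
        have "(v0, u) \<in> (Ed \<union> Ed\<inverse>)\<^sup>*" using conn v0 u unfolding connected_graph_def by (meson)
        then have "(v0, u) \<in> Id" using True by (simp only: Un_empty_left converse_empty rtrancl_empty)
        then show "u = v0" by (simp only: pair_in_Id_conv eq_commute)
      qed
      then have "V = {v0}" using v0 by blast
      then have "norm1 V b = 0" using bsum unfolding norm1_def by simp
      then show "1 / p * (\<Sum>e\<in>Ed. r e * \<bar>fstar e\<bar> powr p) \<le> 1 / p * real (card V) * r_inf Ed r * norm1 V b powr p"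
        using True by simp
    qed
  next
    case False
    define N where "N = norm1 V b"
    define rm where "rm = r_inf Ed r"
    have rm: "\<forall>e\<in>Ed. r e \<le> rm" using finE unfolding rm_def r_inf_def by auto
    obtain e1 where e1: "e1 \<in> Ed" using False by blast
    have rm0: "rm \<ge> 0" using rm[rule_format, OF e1] rpos[rule_format, OF e1] by linarith
    have N0: "N \<ge> 0" unfolding N_def norm1_def by (simp add: sum_nonneg)
    obtain S phi where inv: "tinv V Ed v0 V S phi" using tree_flows[OF graph conn v0] by blast
    define g where "g = (\<lambda>e. \<Sum>u\<in>V. b u * phi u e)"
    have gflow: "is_b_flow V Ed b g"
      unfolding is_b_flow_def
    proof
      fix i assume i: "i \<in> V"
      have "net_outflow Ed g i = (\<Sum>u\<in>V. b u * ((if i = u then 1 else 0) - (if i = v0 then 1 else 0)))"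
        unfolding g_def net_outflow_lin[OF finE] using inv unfolding tinv_def by auto
      also have "\<dots> = (\<Sum>u\<in>V. (if u = i then b u else 0)) - (\<Sum>u\<in>V. (if i = v0 then b u else 0))"
        by (auto simp: right_diff_distrib sum_subtractf intro!: sum.cong)
      also have "\<dots> = b i" using i fin bsum by (cases "i = v0") (simp_all add: sum.delta')
      finally show "net_outflow Ed g i = b i" .
    qed
    have gS: "\<forall>e. e \<notin> S \<longrightarrow> g e = 0" using inv unfolding tinv_def g_def by auto
    have gb: "\<bar>g e\<bar> \<le> N" for e
    proof -
      have "\<bar>g e\<bar> \<le> (\<Sum>u\<in>V. \<bar>b u * phi u e\<bar>)" unfolding g_def by (rule sum_abs)
      also have "\<dots> \<le> (\<Sum>u\<in>V. \<bar>b u\<bar>)"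
      proof (rule sum_mono)
        fix u assume "u \<in> V"
        then have "\<bar>phi u e\<bar> \<le> 1" using inv unfolding tinv_def by blast
        then show "\<bar>b u * phi u e\<bar> \<le> \<bar>b u\<bar>" by (simp add: abs_mult mult_left_le)
      qed
      finally show ?thesis unfolding N_def norm1_def .
    qed
    have SE: "S \<subseteq> Ed" "card S \<le> card V" using inv unfolding tinv_def by auto
    have "(\<Sum>e\<in>Ed. r e * \<bar>g e\<bar> powr p) = (\<Sum>e\<in>S. r e * \<bar>g e\<bar> powr p)"
      using gS SE finE by (intro sum.mono_neutral_right) auto
    also have "\<dots> \<le> (\<Sum>e\<in>S. rm * N powr p)"
    proof (rule sum_mono)
      fix e assume e: "e \<in> S"
      have "\<bar>g e\<bar> powr p \<le> N powr p" using gb p1 by (intro powr_mono2) auto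
      moreover have "r e \<le> rm" "r e \<ge> 0" using rm rpos e SE by (meson less_eq_real_def subsetD)+
      ultimately show "r e * \<bar>g e\<bar> powr p \<le> rm * N powr p"
        by (meson mult_mono powr_ge_zero order_trans rm0)
    qed
    also have "\<dots> = real (card S) * (rm * N powr p)" by simp
    also have "\<dots> \<le> real (card V) * (rm * N powr p)"
      using SE rm0 by (intro mult_right_mono) auto
    finally have "energy p Ed r g \<le> (1/p) * (real (card V) * (rm * N powr p))"
      unfolding energy_def using p1 by (intro mult_left_mono) auto
    moreover have "energy p Ed r fstar \<le> energy p Ed r g" using fopt gflow by blast
    ultimately have "energy p Ed r fstar \<le> (1/p) * (real (card V) * (rm * N powr p))" by linarith
    then show ?thesis unfolding rm_def N_def by (simp only: mult.assoc)
  qed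
qed

theorem mainTheorem18:
  fixes V :: "'a set" and Ed :: "('a \<times> 'a) set"
    and r :: "'a \<times> 'a \<Rightarrow> real" and b :: "'a \<Rightarrow> real"
    and p :: real and fstar :: "'a \<times> 'a \<Rightarrow> real" and xstar :: "'a \<Rightarrow> real"
  assumes graph: "oriented_graph V Ed"
    and conn: "connected_graph V Ed"
    and rpos: "\<forall>e\<in>Ed. r e > 0"
    and bsum: "(\<Sum>i\<in>V. b i) = 0"
    and p1: "p > 1"
    and fflow: "is_b_flow V Ed b fstar"
    and fopt: "\<forall>g. is_b_flow V Ed b g \<longrightarrow> energy p Ed r fstar \<le> energy p Ed r g"
    and xopt: "\<forall>x. dual_obj p V Ed r b x \<le> dual_obj p V Ed r b xstar"
    and kkt: "\<forall>(i, j)\<in>Ed. r (i, j) * fstar (i, j) * \<bar>fstar (i, j)\<bar> powr (p - 2) = xstar i - xstar j"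
  shows "energy p Ed r fstar \<le> (1 / p) * real (card V) * r_inf Ed r * norm1 V b powr p
    \<and> (\<forall>(i, j)\<in>Ed. \<bar>fstar (i, j)\<bar> \<le> (real (card V) * r_ratio Ed r) powr (1 / p) * norm1 V b)
    \<and> (\<forall>(i, j)\<in>Ed. \<bar>xstar i - xstar j\<bar>
          \<le> r (i, j) * (real (card V) * r_ratio Ed r) powr ((p - 1) / p) * norm1 V b powr (p - 1))"
proof -
  have E: "energy p Ed r fstar \<le> (1 / p) * real (card V) * r_inf Ed r * norm1 V b powr p"
    using energy_bound[OF graph conn rpos bsum p1 fopt] .
  have fin: "finite V" "Ed \<subseteq> V \<times> V" using graph unfolding oriented_graph_def by auto
  have finE: "finite Ed" using fin finite_subset finite_cartesian_product by blast
  define n where "n = real (card V)"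
  define N where "N = norm1 V b"
  define rm where "rm = r_inf Ed r"
  define R where "R = r_ratio Ed r"
  have N0: "N \<ge> 0" unfolding N_def norm1_def by (simp add: sum_nonneg)
  have n0: "n \<ge> 0" unfolding n_def by simp
  have fb: "\<bar>fstar e\<bar> \<le> (n * R) powr (1 / p) * N" if e: "e \<in> Ed" for e
  proof -
    have re: "r e > 0" using rpos e by blast
    have rm: "r e \<le> rm" using finE e unfolding rm_def r_inf_def by auto
    have mi: "Min (r ` Ed) \<in> r ` Ed" using finE e by (intro Min_in) auto
    have rmin: "Min (r ` Ed) \<le> r e" "Min (r ` Ed) > 0" using finE e rpos mi by auto
    have R: "R = rm / Min (r ` Ed)" unfolding R_def rm_def r_ratio_def r_inf_def ..
    have rmR: "rm / r e \<le> R" unfolding R using rmin re rm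
      by (intro divide_left_mono) auto
    have "r e * \<bar>fstar e\<bar> powr p \<le> (\<Sum>e\<in>Ed. r e * \<bar>fstar e\<bar> powr p)"
      using finE e rpos by (intro member_le_sum) (auto simp: less_imp_le)
    also have "\<dots> = p * energy p Ed r fstar" unfolding energy_def using p1 by simp
    also have "\<dots> \<le> n * rm * N powr p" using E p1 unfolding n_def rm_def N_def
      by (simp add: field_simps)
    finally have "r e * \<bar>fstar e\<bar> powr p \<le> n * rm * N powr p" .
    then have "\<bar>fstar e\<bar> powr p \<le> n * (rm / r e) * N powr p" using re
      by (simp add: field_simps)
    also have "\<dots> \<le> n * R * N powr p" using rmR n0 N0
      by (intro mult_right_mono mult_left_mono) auto
    finally have A: "\<bar>fstar e\<bar> powr p \<le> n * R * N powr p" .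
    have "\<bar>fstar e\<bar> = (\<bar>fstar e\<bar> powr p) powr (1/p)" using p1 by (simp add: powr_powr)
    also have "\<dots> \<le> (n * R * N powr p) powr (1/p)" using A p1 by (intro powr_mono2) auto
    also have "\<dots> = (n * R) powr (1/p) * (N powr p) powr (1/p)" by (rule powr_mult)
    also have "\<dots> = (n * R) powr (1/p) * N" using p1 N0 by (simp add: powr_powr)
    finally show ?thesis .
  qed
  have xb: "\<bar>xstar i - xstar j\<bar> \<le> r (i, j) * (n * R) powr ((p - 1) / p) * N powr (p - 1)"
    if e: "(i, j) \<in> Ed" for i j
  proof -
    let ?f = "\<bar>fstar (i, j)\<bar>"
    have re: "r (i, j) > 0" using rpos e by blast
    have "\<bar>xstar i - xstar j\<bar> = r (i, j) * (?f * ?f powr (p - 2))"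
    proof -
      have k: "r (i, j) * fstar (i, j) * ?f powr (p - 2) = xstar i - xstar j"
        using kkt e by blast
      have "\<bar>r (i, j) * fstar (i, j) * ?f powr (p - 2)\<bar> = r (i, j) * (?f * ?f powr (p - 2))"
        using re by (simp add: abs_mult)
      then show ?thesis using k by simp
    qed
    also have "?f * ?f powr (p - 2) = ?f powr (p - 1)"
    proof (cases "?f = 0")
      case True then show ?thesis by simp
    next
      case False
      have "?f powr (p - 1) = ?f powr (1 + (p - 2))" by simp
      also have "\<dots> = ?f powr 1 * ?f powr (p - 2)" by (rule powr_add)
      finally show ?thesis by simp
    qed
    also have "?f powr (p - 1) \<le> ((n * R) powr (1 / p) * N) powr (p - 1)"
      using fb[OF e] p1 by (intro powr_mono2) auto
    also have "\<dots> = (n * R) powr ((p - 1) / p) * N powr (p - 1)"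
      by (simp add: powr_mult powr_powr)
    finally show ?thesis using re by (simp add: mult.assoc)
  qed
  show ?thesis using E fb xb unfolding n_def N_def R_def by auto
qed

end
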